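(* Let $k\ge 1$ be an integer, let $\beta\in\mathbb{R}_{>1}$ be a Parry number and let $U_\beta$ be the corresponding canonical Parry--Bertrand numeration system. Let $\mathbf{s}$ be a binary $U_\beta$-automatic sequence, generated by a DFAO $\mathcal{B}$. Then $C_{2k}(\mathbf{s},N)\gg N$; that is, there exists a constant $c>0$, depending only on $\beta$, $k$ and the number of states of $\mathcal{B}$, such that $C_{2k}(\mathbf{s},N)\ge cN$ for all sufficiently large $N$.
   Context: Correlation measure: for a sequence $\mathbf{s}=(\mathbf{s}(n))_{n\ge0}$ over $\{0,1\}$, an integer $k\ge1$, a vector $D=(d_1,\dots,d_k)\in\mathbb{N}^k$ with $0\le d_1<d_2<\cdots<d_k$ and $M\in\mathbb{N}$, put $V(\mathbf{s},M,D)=\sum_{n=0}^{M-1}(-1)^{\mathbf{s}(n+d_1)+\cdots+\mathbf{s}(n+d_k)}$. The $N$th correlation measure of order $k$ is $C_k(\mathbf{s},N)=\max_{M,D}|V(\mathbf{s},M,D)|$, the maximum taken over all such $D$ and all integers $M$ with $M+d_k\le N$. $\beta$-expansions: for $\beta>1$, let $A_\beta=\{0,1,\dots,\lceil\beta\rceil-1\}$; for $x\in[0,1)$, $d_\beta(x)$ is the greedy expansion $x=\sum_{j\ge1}c_j\beta^{-j}$ with $c_j\in A_\beta$, and $d_\beta(1)=\lim_{x\to1^-}d_\beta(x)$. $\beta$ is a Parry number if $d_\beta(1)$ is ultimately periodic. Canonical numeration $U_\beta$: write $d_\beta(1)=t(1)\cdots t(m)(t(m+1)\cdots t(m+k'))^\omega$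 with $m,k'\ge0$ minimal. Set $U_\beta(0)=1$, $U_\beta(i)=t(1)U_\beta(i-1)+\cdots+t(i)U_\beta(0)+1$ for $1\le i\le m+k'-1$, and for $n\ge m+k'$: $U_\beta(n)=t(1)U_\beta(n-1)+\cdots+t(m+k')U_\beta(n-m-k')+U_\beta(n-k')-t(1)U_\beta(n-k'-1)-\cdots-t(m)U_\beta(n-m-k')$. Every $n\ge0$ has a greedy representation $n=\sum_{i=0}^t c_iU_\beta(i)$; $\mathrm{rep}_{U_\beta}(n)=c_t\cdots c_0$ (with $c_t\neq 0$; $\mathrm{rep}(0)$ is the empty word), and $L_\beta=\{\mathrm{rep}_{U_\beta}(n):n\ge0\}$. A binary sequence $\mathbf{s}$ is $U_\beta$-automatic if there is a deterministic finite automaton with output (DFAO) $\mathcal{B}$ over the digit alphabet, with outputs in $\{0,1\}$, such that $\mathbf{s}(n)$ is the output of $\mathcal{B}$ on input $\mathrm{rep}_{U_\beta}(n)$ for all $n\ge0$. *)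

theory Defs
  imports Complex_Main
begin

definition beta_T :: "real \<Rightarrow> real \<Rightarrow> real" where
  "beta_T \<beta> x = \<beta> * x - of_int \<lfloor>\<beta> * x\<rfloor>"

definition beta_digit :: "real \<Rightarrow> real \<Rightarrow> nat \<Rightarrow> nat" where
  "beta_digit \<beta> x j = nat \<lfloor>\<beta> * ((beta_T \<beta> ^^ (j - 1)) x)\<rfloor>"

text \<open>d_beta(1) = lim_{x \<rightarrow> 1-} d_beta(x), the limit taken digitwise
  (product of discrete topologies): digit j of d_beta(1) is the value that digit j of
  d_beta(x) eventually takes as x tends to 1 from the left.\<close>
definition dbeta1 :: "real \<Rightarrow> nat \<Rightarrow> nat" where
  "dbeta1 \<beta> j = (THE c. \<forall>\<^sub>F x in at_left 1. beta_digit \<beta> x j = c)"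

definition ult_periodic_from :: "(nat \<Rightarrow> nat) \<Rightarrow> nat \<Rightarrow> nat \<Rightarrow> bool" where
  "ult_periodic_from t m p \<longleftrightarrow> p > 0 \<and> (\<forall>n>m. t (n + p) = t n)"

definition parry :: "real \<Rightarrow> bool" where
  "parry \<beta> \<longleftrightarrow> \<beta> > 1 \<and> (\<exists>m p. ult_periodic_from (dbeta1 \<beta>) m p)"

text \<open>Minimal preperiod m and minimal period k' of d_beta(1) = t(1)...t(m)(t(m+1)...t(m+k'))^omega.\<close>
definition parry_m :: "real \<Rightarrow> nat" where
  "parry_m \<beta> = (LEAST m. \<exists>p. ult_periodic_from (dbeta1 \<beta>) m p)"

definition parry_k :: "real \<Rightarrow> nat" where
  "parry_k \<beta> = (LEAST p. ult_periodic_from (dbeta1 \<beta>) (parry_m \<beta>) p)"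

definition U_step :: "(nat \<Rightarrow> nat) \<Rightarrow> nat \<Rightarrow> nat \<Rightarrow> int list \<Rightarrow> int" where
  "U_step t m kp xs = (let n = length xs in
     if n = 0 then 1
     else if n < m + kp then (\<Sum>j=1..n. int (t j) * xs ! (n - j)) + 1
     else (\<Sum>j=1..m+kp. int (t j) * xs ! (n - j)) + xs ! (n - kp)
          - (\<Sum>j=1..m. int (t j) * xs ! (n - kp - j)))"

primrec U_list :: "(nat \<Rightarrow> nat) \<Rightarrow> nat \<Rightarrow> nat \<Rightarrow> nat \<Rightarrow> int list" where
  "U_list t m kp 0 = []"
| "U_list t m kp (Suc n) = U_list t m kp n @ [U_step t m kp (U_list t m kp n)]"

definition U_beta :: "real \<Rightarrow> nat \<Rightarrow> int" where
  "U_beta \<beta> n = U_list (dbeta1 \<beta>) (parry_m \<beta>) (parry_k \<beta>) (Suc n) ! n"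

primrec greedy_digits :: "(nat \<Rightarrow> nat) \<Rightarrow> nat \<Rightarrow> nat \<Rightarrow> nat list" where
  "greedy_digits U 0 r = [r div U 0]"
| "greedy_digits U (Suc i) r = (r div U (Suc i)) # greedy_digits U i (r mod U (Suc i))"

definition rep_U :: "real \<Rightarrow> nat \<Rightarrow> nat list" where
  "rep_U \<beta> n = (let U = (\<lambda>i. nat (U_beta \<beta> i)) in
     if n = 0 then [] else greedy_digits U (GREATEST i. U i \<le> n) n)"

definition dfao :: "nat \<Rightarrow> (nat \<Rightarrow> nat \<Rightarrow> nat) \<Rightarrow> nat \<Rightarrow> (nat \<Rightarrow> nat) \<Rightarrow> bool" where
  "dfao Q \<delta> q0 out \<longleftrightarrow> q0 < Q \<and> (\<forall>q d. q < Q \<longrightarrow> \<delta> q d < Q) \<and> (\<forall>q<Q. out q \<le> 1)"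

definition generated_by :: "real \<Rightarrow> (nat \<Rightarrow> nat \<Rightarrow> nat) \<Rightarrow> nat \<Rightarrow> (nat \<Rightarrow> nat) \<Rightarrow> (nat \<Rightarrow> nat) \<Rightarrow> bool" where
  "generated_by \<beta> \<delta> q0 out s \<longleftrightarrow> (\<forall>n. s n = out (foldl \<delta> q0 (rep_U \<beta> n)))"

definition corrV :: "(nat \<Rightarrow> nat) \<Rightarrow> nat \<Rightarrow> nat list \<Rightarrow> int" where
  "corrV s M D = (\<Sum>n<M. (-1) ^ (\<Sum>d\<leftarrow>D. s (n + d)))"

definition corrC :: "nat \<Rightarrow> (nat \<Rightarrow> nat) \<Rightarrow> nat \<Rightarrow> int" where
  "corrC k s N = Max {\<bar>corrV s M D\<bar> | M D.
       length D = k \<and> sorted_wrt (<) D \<and> M + last D \<le> N}"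

end

theory Submission
  imports Defs
begin

definition Cb :: "real \<Rightarrow> nat \<Rightarrow> real" where
  "Cb \<beta> J = (\<Sum>j=1..J. real (dbeta1 \<beta> j) * \<beta> ^ (J - j))"

lemma Cb_Suc: "Cb \<beta> (Suc J) = \<beta> * Cb \<beta> J + real (dbeta1 \<beta> (Suc J))"
proof -
  have "Cb \<beta> (Suc J) = (\<Sum>j=1..J. real (dbeta1 \<beta> j) * \<beta> ^ (Suc J - j)) + real (dbeta1 \<beta> (Suc J))"
    unfolding Cb_def by (subst sum.cl_ivl_Suc) simp
  also have "(\<Sum>j=1..J. real (dbeta1 \<beta> j) * \<beta> ^ (Suc J - j)) = \<beta> * Cb \<beta> J"
    unfolding Cb_def sum_distrib_left
    by (rule sum.cong) (auto simp: Suc_diff_le)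
  finally show ?thesis .
qed

lemma dbeta1_eq:
  assumes "\<forall>\<^sub>F x in at_left 1. beta_digit \<beta> x j = c"
  shows "dbeta1 \<beta> j = c"
  unfolding dbeta1_def
proof (rule the_equality)
  show "\<forall>\<^sub>F x in at_left 1. beta_digit \<beta> x j = c" by fact
  fix c' assume "\<forall>\<^sub>F x in at_left (1::real). beta_digit \<beta> x j = c'"
  from eventually_conj[OF assms this] have "\<forall>\<^sub>F x in at_left (1::real). c = c'" by (rule eventually_mono) auto
  then show "c' = c" by (auto dest: eventually_happens')
qed

lemma affine:
  assumes b: "\<beta> > 1"
  shows "\<exists>\<delta>>0. (\<forall>x. 1-\<delta> < x \<and> x < 1 \<longrightarrow> (beta_T \<beta> ^^ J) x = \<beta>^J * x - Cb \<beta> J)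
     \<and> 0 < \<beta>^J - Cb \<beta> J \<and> \<beta>^J - Cb \<beta> J \<le> 1"
proof (induction J)
  case 0
  then show ?case by (auto simp: Cb_def intro: exI[of _ 1])
next
  case (Suc J)
  then obtain \<delta> where d: "\<delta> > 0" and aff: "\<And>x. 1-\<delta> < x \<Longrightarrow> x < 1 \<Longrightarrow> (beta_T \<beta> ^^ J) x = \<beta>^J * x - Cb \<beta> J"
    and y0: "0 < \<beta>^J - Cb \<beta> J" and y1: "\<beta>^J - Cb \<beta> J \<le> 1" by blast
  define y where "y = \<beta>^J - Cb \<beta> J"
  define e where "e = \<lceil>\<beta> * y\<rceil> - 1"
  have by0: "\<beta> * y > 0" using b y0 by (simp add: y_def)
  have e0: "e \<ge> 0" using by0 by (simp add: e_def)
  have e1: "e < \<beta> * y" "\<beta> * y \<le> e + 1" unfolding e_def by linarith+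
  define \<delta>' where "\<delta>' = min \<delta> ((\<beta>*y - e) / \<beta>^(Suc J))"
  have bp: "\<beta>^(Suc J) > 0" using b by simp
  have d': "\<delta>' > 0" using d e1 bp by (simp add: \<delta>'_def)
  have key: "\<lfloor>\<beta> * (beta_T \<beta> ^^ J) x\<rfloor> = e \<and> (beta_T \<beta> ^^ Suc J) x = \<beta> * ((beta_T \<beta> ^^ J) x) - e"
    if x: "1-\<delta>' < x" "x < 1" for x
  proof -
    have z: "(beta_T \<beta> ^^ J) x = \<beta>^J * x - Cb \<beta> J" using aff x by (simp add: \<delta>'_def)
    have "\<beta> * (\<beta>^J * x - Cb \<beta> J) = \<beta>*y - \<beta>^(Suc J) * (1 - x)" by (simp add: y_def algebra_simps)
    moreover have "\<beta>^(Suc J) * (1 - x) > 0" using bp x by simp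
    moreover have "\<beta>^(Suc J) * (1 - x) < \<beta>^(Suc J) * \<delta>'" using bp x by (intro mult_strict_left_mono) auto
    moreover have "\<beta>^(Suc J) * \<delta>' \<le> \<beta>*y - e" using bp
      by (simp add: \<delta>'_def min_le_iff_disj) (metis min.cobounded2 mult.commute pos_le_divide_eq)
    ultimately have "e \<le> \<beta> * (\<beta>^J * x - Cb \<beta> J)" "\<beta> * (\<beta>^J * x - Cb \<beta> J) < e + 1"
      using e1 by linarith+
    then have fl: "\<lfloor>\<beta> * (beta_T \<beta> ^^ J) x\<rfloor> = e" using z by (simp add: floor_eq_iff)
    show ?thesis using fl by (simp add: beta_T_def)
  qed
  have ev: "\<forall>\<^sub>F x in at_left 1. beta_digit \<beta> x (Suc J) = nat e"
  proof -
    have "\<forall>\<^sub>F x in at_left 1. x \<in> {1-\<delta>'<..<(1::real)}" using d' by (intro eventually_at_left_real) simp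
    then show ?thesis by (rule eventually_mono) (simp add: beta_digit_def key)
  qed
  have t: "real (dbeta1 \<beta> (Suc J)) = e" using dbeta1_eq[OF ev] e0 by simp
  show ?case
  proof (intro exI[of _ \<delta>'] conjI allI impI)
    show "\<delta>' > 0" by fact
    fix x assume x: "1 - \<delta>' < x \<and> x < 1"
    then have "(beta_T \<beta> ^^ J) x = \<beta>^J * x - Cb \<beta> J" by (intro aff) (auto simp: \<delta>'_def)
    then show "(beta_T \<beta> ^^ Suc J) x = \<beta> ^ Suc J * x - Cb \<beta> (Suc J)"
    proof -
      have "(beta_T \<beta> ^^ Suc J) x = \<beta> * (\<beta>^J*x - Cb \<beta> J) - e"
        using key[of x] x \<open>(beta_T \<beta> ^^ J) x = \<beta>^J * x - Cb \<beta> J\<close> by simp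
      then show ?thesis by (simp add: Cb_Suc t algebra_simps)
    qed
  next
    show "0 < \<beta> ^ Suc J - Cb \<beta> (Suc J)" "\<beta> ^ Suc J - Cb \<beta> (Suc J) \<le> 1"
      using e1 by (simp_all add: Cb_Suc t y_def algebra_simps)
  qed
qed


lemma U_list_map: "U_list t m kp n = map (\<lambda>i. U_list t m kp (Suc i) ! i) [0..<n]"
proof (induction n)
  case 0 then show ?case by simp
next
  case (Suc n)
  have l: "length (U_list t m kp n) = n" using Suc by simp
  show ?case using Suc l by (simp add: nth_append)
qed

lemma U_beta_step: "U_beta \<beta> n = U_step (dbeta1 \<beta>) (parry_m \<beta>) (parry_k \<beta>) (map (U_beta \<beta>) [0..<n])"
proof -
  have "U_list (dbeta1 \<beta>) (parry_m \<beta>) (parry_k \<beta>) n = map (U_beta \<beta>) [0..<n]"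
    by (subst U_list_map) (simp add: U_beta_def)
  moreover have "length (U_list (dbeta1 \<beta>) (parry_m \<beta>) (parry_k \<beta>) n) = n"
    by (subst U_list_map) simp
  ultimately show ?thesis unfolding U_beta_def by (simp add: nth_append)
qed

lemma parry_period:
  assumes "parry \<beta>"
  shows "parry_k \<beta> > 0 \<and> (\<forall>n>parry_m \<beta>. dbeta1 \<beta> (n + parry_k \<beta>) = dbeta1 \<beta> n)"
proof -
  from assms obtain m p where "ult_periodic_from (dbeta1 \<beta>) m p" unfolding parry_def by blast
  then have "\<exists>p. ult_periodic_from (dbeta1 \<beta>) (parry_m \<beta>) p"
    using LeastI_ex[of "\<lambda>m. \<exists>p. ult_periodic_from (dbeta1 \<beta>) m p"] unfolding parry_m_def by blast
  then have "ult_periodic_from (dbeta1 \<beta>) (parry_m \<beta>) (parry_k \<beta>)"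
    unfolding parry_k_def by (rule LeastI_ex)
  then show ?thesis unfolding ult_periodic_from_def by blast
qed

lemma U_rec:
  assumes par: "parry \<beta>"
  shows "U_beta \<beta> n = 1 + (\<Sum>j=1..n. int (dbeta1 \<beta> j) * U_beta \<beta> (n-j))"
proof (induction n rule: less_induct)
  case (less n)
  define t where "t = dbeta1 \<beta>"
  define m where "m = parry_m \<beta>"
  define kp where "kp = parry_k \<beta>"
  define u where "u = U_beta \<beta>"
  have kp0: "kp > 0" and per: "\<And>n. n > m \<Longrightarrow> t (n + kp) = t n"
    using parry_period[OF par] unfolding kp_def m_def t_def by auto
  have st: "u n = U_step t m kp (map u [0..<n])" unfolding u_def t_def m_def kp_def by (rule U_beta_step)
  have nth: "map u [0..<n] ! i = u i" if "i < n" for i using that by simp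
  show ?case
  proof (cases "n = 0")
    case True then show ?thesis using st by (simp add: U_step_def u_def)
  next
    case False
    note n0 = False
    have S1: "(\<Sum>j=1..N. int (t j) * map u [0..<n] ! (n - j)) = (\<Sum>j=1..N. int (t j) * u (n - j))"
      if "N \<le> n" for N using that n0 by (intro sum.cong) auto
    show ?thesis
    proof (cases "n < m + kp")
      case True
      then show ?thesis using st n0 S1[of n] by (simp add: U_step_def Let_def t_def u_def)
    next
      case False
      then have nge: "m + kp \<le> n" by simp
      have S2: "(\<Sum>j=1..m. int (t j) * map u [0..<n] ! (n - kp - j)) = (\<Sum>j=1..m. int (t j) * u (n - kp - j))"
        using nge kp0 by (intro sum.cong) auto
      have e1: "u n = (\<Sum>j=1..m+kp. int (t j) * u (n - j)) + u (n - kp) - (\<Sum>j=1..m. int (t j) * u (n - kp - j))"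
        using st n0 False S1[of "m+kp"] S2 nge kp0 by (simp add: U_step_def Let_def)
      have ih: "u (n - kp) = 1 + (\<Sum>j=1..n-kp. int (t j) * u (n - kp - j))"
        using less[of "n-kp"] kp0 n0 unfolding u_def t_def by simp
      define g where "g j = int (t j) * u (n - j)" for j
      define h where "h j = int (t j) * u (n - kp - j)" for j
      have a: "(\<Sum>j=1..n. g j) = (\<Sum>j=1..m+kp. g j) + (\<Sum>j=m+1..n-kp. h j)"
      proof -
        have "(\<Sum>j=1..n. g j) = (\<Sum>j=1..(m+kp) + (n - (m+kp)). g j)" using nge by simp
        also have "\<dots> = (\<Sum>j=1..m+kp. g j) + (\<Sum>j=m+kp+1..(m+kp) + (n - (m+kp)). g j)"
          by (rule sum.ub_add_nat) simp
        also have "(\<Sum>j=m+kp+1..(m+kp) + (n - (m+kp)). g j) = (\<Sum>j=(m+1)+kp..(n-kp)+kp. g j)"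
          using nge by (simp add: algebra_simps)
        also have "\<dots> = (\<Sum>j=m+1..n-kp. g (j + kp))" by (rule sum.shift_bounds_cl_nat_ivl)
        also have "\<dots> = (\<Sum>j=m+1..n-kp. h j)"
          by (intro sum.cong) (auto simp: g_def h_def per add.commute)
        finally show ?thesis .
      qed
      have b: "(\<Sum>j=1..n-kp. h j) = (\<Sum>j=1..m. h j) + (\<Sum>j=m+1..n-kp. h j)"
      proof -
        have "(\<Sum>j=1..n-kp. h j) = (\<Sum>j=1..m + (n - kp - m). h j)" using nge by simp
        also have "\<dots> = (\<Sum>j=1..m. h j) + (\<Sum>j=m+1..m + (n - kp - m). h j)"
          by (rule sum.ub_add_nat) simp
        finally show ?thesis using nge by simp
      qed
      show ?thesis using e1 ih a b unfolding g_def h_def u_def t_def by simp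
    qed
  qed
qed


lemma ur_rec: assumes "parry \<beta>"
  shows "real_of_int (U_beta \<beta> n) = 1 + (\<Sum>j=1..n. real (dbeta1 \<beta> j) * real_of_int (U_beta \<beta> (n-j)))"
  by (subst U_rec[OF assms]) simp

lemma Cb_bounds: assumes "\<beta> > 1" shows "0 < \<beta>^n - Cb \<beta> n" "\<beta>^n - Cb \<beta> n \<le> 1"
  using affine[OF assms, of n] by auto

lemma U_lower: assumes b: "\<beta> > 1" and p: "parry \<beta>"
  shows "\<beta>^n \<le> real_of_int (U_beta \<beta> n)"
proof (induction n rule: less_induct)
  case (less n)
  have "(\<Sum>j=1..n. real (dbeta1 \<beta> j) * \<beta>^(n-j)) \<le> (\<Sum>j=1..n. real (dbeta1 \<beta> j) * real_of_int (U_beta \<beta> (n-j)))"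
    by (intro sum_mono mult_left_mono less) auto
  then show ?case using ur_rec[OF p, of n] Cb_bounds(2)[OF b, of n] unfolding Cb_def by linarith
qed

definition Sg :: "real \<Rightarrow> nat \<Rightarrow> real" where "Sg \<beta> k = (\<Sum>i<Suc k. \<beta>^i)"

lemma Sg_swap: "(\<Sum>j=1..n. real (dbeta1 \<beta> j) * Sg \<beta> (n-j)) = (\<Sum>l=1..n. Cb \<beta> l)"
proof (induction n)
  case 0 then show ?case by simp
next
  case (Suc n)
  have A: "(\<Sum>j=1..Suc n. real (dbeta1 \<beta> j) * Sg \<beta> (Suc n-j))
     = (\<Sum>j=1..n. real (dbeta1 \<beta> j) * Sg \<beta> (Suc n-j)) + real (dbeta1 \<beta> (Suc n))"
    by (subst sum.cl_ivl_Suc) (simp add: Sg_def)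
  have B: "(\<Sum>j=1..n. real (dbeta1 \<beta> j) * Sg \<beta> (Suc n-j))
     = (\<Sum>j=1..n. real (dbeta1 \<beta> j) * Sg \<beta> (n-j)) + (\<Sum>j=1..n. real (dbeta1 \<beta> j) * \<beta>^(Suc n - j))"
    unfolding sum.distrib[symmetric]
    by (intro sum.cong) (auto simp: Sg_def Suc_diff_le algebra_simps)
  have Cc: "Cb \<beta> (Suc n) = (\<Sum>j=1..n. real (dbeta1 \<beta> j) * \<beta>^(Suc n - j)) + real (dbeta1 \<beta> (Suc n))"
      unfolding Cb_def by (subst sum.cl_ivl_Suc) simp
  show ?case using A B Cc Suc by simp
qed

lemma Sg_alt: "(\<Sum>i<Suc n. \<beta>^i) = 1 + (\<Sum>l=1..n. (\<beta>::real)^l)"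
  by (induction n) simp_all

lemma U_upper: assumes b: "\<beta> > 1" and p: "parry \<beta>"
  shows "real_of_int (U_beta \<beta> n) \<le> Sg \<beta> n"
proof (induction n rule: less_induct)
  case (less n)
  have "(\<Sum>j=1..n. real (dbeta1 \<beta> j) * real_of_int (U_beta \<beta> (n-j))) \<le> (\<Sum>j=1..n. real (dbeta1 \<beta> j) * Sg \<beta> (n-j))"
    by (intro sum_mono mult_left_mono less) auto
  also have "\<dots> = (\<Sum>l=1..n. Cb \<beta> l)" by (rule Sg_swap)
  also have "\<dots> \<le> (\<Sum>l=1..n. \<beta>^l)" by (intro sum_mono) (metis Cb_bounds(1)[OF b] diff_gt_0_iff_gt less_imp_le)
  finally have "real_of_int (U_beta \<beta> n) \<le> 1 + (\<Sum>l=1..n. \<beta>^l)" using ur_rec[OF p, of n] by linarith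
  also have "1 + (\<Sum>l=1..n. \<beta>^l) = Sg \<beta> n"
    unfolding Sg_def by (rule Sg_alt[symmetric])
  finally show ?case .
qed

lemma Sg_le: assumes b: "\<beta> > 1" shows "Sg \<beta> n \<le> \<beta>^Suc n / (\<beta> - 1)"
proof -
  have "Sg \<beta> n = (\<beta>^Suc n - 1) / (\<beta> - 1)" unfolding Sg_def using b by (subst geometric_sum) auto
  also have "\<dots> \<le> \<beta>^Suc n / (\<beta> - 1)" using b by (simp add: divide_right_mono)
  finally show ?thesis .
qed

lemma U_gap: assumes b: "\<beta> > 1" and p: "parry \<beta>"
  shows "real_of_int (U_beta \<beta> (Suc n)) - real_of_int (U_beta \<beta> n) \<ge> (\<beta> - 1) * \<beta>^n"
proof -
  define t where "t j = real (dbeta1 \<beta> j)" for j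
  define ur where "ur j = real_of_int (U_beta \<beta> j)" for j
  have t1: "t 1 \<ge> 1"
  proof -
    have "Cb \<beta> 1 = t 1" by (simp add: Cb_def t_def)
    then have "t 1 > 0" using Cb_bounds(2)[OF b, of 1] b by simp
    then show ?thesis unfolding t_def by simp
  qed
  have lo: "\<beta>^j \<le> ur j" for j unfolding ur_def by (rule U_lower[OF b p])
  have "t 1 * (ur n - \<beta>^n) \<le> (\<Sum>j=1..Suc n. t j * (ur (Suc n - j) - \<beta>^(Suc n - j)))"
    using member_le_sum[of 1 "{1..Suc n}" "\<lambda>j. t j * (ur (Suc n - j) - \<beta>^(Suc n - j))"] lo
    by (auto simp: t_def)
  moreover have "ur n - \<beta>^n \<le> t 1 * (ur n - \<beta>^n)" using t1 lo[of n] by (simp add: mult_le_cancel_right1)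
  moreover have "(\<Sum>j=1..Suc n. t j * (ur (Suc n - j) - \<beta>^(Suc n - j)))
      = (\<Sum>j=1..Suc n. t j * ur (Suc n - j)) - Cb \<beta> (Suc n)"
    by (simp add: Cb_def t_def right_diff_distrib sum_subtractf)
  moreover have "ur (Suc n) = 1 + (\<Sum>j=1..Suc n. t j * ur (Suc n - j))" unfolding ur_def t_def by (rule ur_rec[OF p])
  moreover have "\<beta>^Suc n - Cb \<beta> (Suc n) \<le> 1" by (rule Cb_bounds(2)[OF b])
  ultimately have "ur (Suc n) - ur n \<ge> \<beta>^Suc n - \<beta>^n" by linarith
  then show ?thesis by (simp add: ur_def algebra_simps)
qed


definition Uv :: "real \<Rightarrow> nat \<Rightarrow> nat" where "Uv \<beta> i = nat (U_beta \<beta> i)"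

lemma U_pos: assumes b: "\<beta> > 1" and p: "parry \<beta>" shows "U_beta \<beta> i > 0"
proof -
  have "(0::real) < \<beta>^i" using b by simp
  also have "\<dots> \<le> real_of_int (U_beta \<beta> i)" by (rule U_lower[OF b p])
  finally show ?thesis by simp
qed

lemma Uv_real: assumes b: "\<beta> > 1" and p: "parry \<beta>" shows "real (Uv \<beta> i) = real_of_int (U_beta \<beta> i)"
  using U_pos[OF b p, of i] by (simp add: Uv_def)

lemma Uv_smono: assumes b: "\<beta> > 1" and p: "parry \<beta>" shows "strict_mono (Uv \<beta>)"
unfolding strict_mono_Suc_iff
proof
  fix n
  have "(0::real) < (\<beta> - 1) * \<beta>^n" using b by simp
  then have "real (Uv \<beta> n) < real (Uv \<beta> (Suc n))" using U_gap[OF b p, of n] Uv_real[OF b p] by simp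
  then show "Uv \<beta> n < Uv \<beta> (Suc n)" by simp
qed

lemma greedy_zeros:
  assumes b: "\<beta> > 1" and p: "parry \<beta>" and r: "r < Uv \<beta> (Suc j)"
  shows "greedy_digits (Uv \<beta>) (j + a) r = replicate a 0 @ greedy_digits (Uv \<beta>) j r"
proof (induction a)
  case 0 then show ?case by simp
next
  case (Suc a)
  have "Uv \<beta> (Suc j) \<le> Uv \<beta> (Suc (j + a))" using strict_mono_mono[OF Uv_smono[OF b p]] by (simp add: monoD)
  then have "r < Uv \<beta> (Suc (j + a))" using r by simp
  then show ?case using Suc by simp
qed

lemma greatest_eq:
  assumes b: "\<beta> > 1" and p: "parry \<beta>" and "Uv \<beta> T \<le> n" "n < Uv \<beta> (Suc T)"
  shows "(GREATEST i. Uv \<beta> i \<le> n) = T"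
proof (rule Greatest_equality)
  show "Uv \<beta> T \<le> n" by fact
  fix i assume "Uv \<beta> i \<le> n"
  show "i \<le> T"
  proof (rule ccontr)
    assume "\<not> i \<le> T"
    then have "Suc T \<le> i" by simp
    then have "Uv \<beta> (Suc T) \<le> Uv \<beta> i" using strict_mono_mono[OF Uv_smono[OF b p]] by (simp add: monoD)
    then show False using assms(4) \<open>Uv \<beta> i \<le> n\<close> by simp
  qed
qed

lemma rep_shift:
  assumes b: "\<beta> > 1" and p: "parry \<beta>" and T: "Suc j \<le> T" and r: "r < Uv \<beta> (Suc j)"
    and gap: "Uv \<beta> T + r < Uv \<beta> (Suc T)"
  shows "rep_U \<beta> (Uv \<beta> T + r) = 1 # replicate (T - Suc j) 0 @ greedy_digits (Uv \<beta>) j r"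
proof -
  have sm: "strict_mono (Uv \<beta>)" by (rule Uv_smono[OF b p])
  have U0: "Uv \<beta> T > 0" using U_pos[OF b p, of T] by (simp add: Uv_def)
  have rT: "r < Uv \<beta> T" using r strict_mono_mono[OF sm] T by (metis monoD order_less_le_trans)
  have G: "(GREATEST i. Uv \<beta> i \<le> Uv \<beta> T + r) = T" by (rule greatest_eq[OF b p]) (use gap in auto)
  obtain i where Ti: "T = Suc i" and i: "i = j + (T - Suc j)" using T by (cases T) auto
  have dv: "(Uv \<beta> T + r) div Uv \<beta> T = 1" using rT U0 by (simp add: div_add_self1 div_less)
  have md: "(Uv \<beta> T + r) mod Uv \<beta> T = r" using rT by simp
  have "rep_U \<beta> (Uv \<beta> T + r) = greedy_digits (Uv \<beta>) T (Uv \<beta> T + r)"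
    using U0 G unfolding rep_U_def Uv_def[symmetric] by (simp add: Let_def Uv_def[abs_def])
  also have "\<dots> = 1 # greedy_digits (Uv \<beta>) i r" using dv md Ti by simp
  also have "greedy_digits (Uv \<beta>) i r = replicate (T - Suc j) 0 @ greedy_digits (Uv \<beta>) j r"
    using greedy_zeros[OF b p r, of "T - Suc j"] i by simp
  finally show ?thesis by simp
qed


lemma sorted_le_last: "sorted_wrt (<) D \<Longrightarrow> x \<in> set D \<Longrightarrow> x \<le> (last D :: nat)"
proof (induction D)
  case Nil then show ?case by simp
next
  case (Cons a D)
  then show ?case by (cases "D = []") (auto intro: less_imp_le order_trans[OF _ Cons.IH])
qed

lemma corrC_ge:
  assumes "length D = k'" "sorted_wrt (<) D" "M + last D \<le> N" "k' \<ge> 1"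
  shows "\<bar>corrV s M D\<bar> \<le> corrC k' s N"
proof -
  let ?S = "{\<bar>corrV s M D\<bar> | M D. length D = k' \<and> sorted_wrt (<) D \<and> M + last D \<le> N}"
  have "?S \<subseteq> (\<lambda>(M,D). \<bar>corrV s M D\<bar>) ` ({..N} \<times> {D. set D \<subseteq> {..N} \<and> length D = k'})"
  proof
    fix z assume "z \<in> ?S"
    then obtain M D where z: "z = \<bar>corrV s M D\<bar>" "length D = k'" "sorted_wrt (<) D" "M + last D \<le> N" by blast
    have "set D \<subseteq> {..N}" using sorted_le_last[OF z(3)] z(4) by fastforce
    then show "z \<in> (\<lambda>(M,D). \<bar>corrV s M D\<bar>) ` ({..N} \<times> {D. set D \<subseteq> {..N} \<and> length D = k'})"
      using z by (intro image_eqI[of _ _ "(M,D)"]) auto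
  qed
  moreover have "finite ((\<lambda>(M,D). \<bar>corrV s M D\<bar>) ` ({..N} \<times> {D. set D \<subseteq> {..N} \<and> length D = k'}))"
    by (intro finite_imageI finite_cartesian_product finite_lists_length_eq) auto
  ultimately have "finite ?S" by (rule finite_subset)
  moreover have "\<bar>corrV s M D\<bar> \<in> ?S" using assms by blast
  ultimately show ?thesis unfolding corrC_def by (rule Max_ge)
qed

lemma pigeon:
  assumes "finite A" "\<forall>x\<in>A. f x < (Q::nat)" "card A > Q * m"
  shows "\<exists>p. card {x\<in>A. f x = p} > m"
proof (rule ccontr)
  assume "\<not> ?thesis"
  then have le: "card {x\<in>A. f x = p} \<le> m" for p using not_less by blast
  have "A = (\<Union>p\<in>{..<Q}. {x\<in>A. f x = p})" using assms(2) by auto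
  then have "card A \<le> (\<Sum>p\<in>{..<Q}. card {x\<in>A. f x = p})" by (metis card_UN_le finite_lessThan)
  also have "\<dots> \<le> (\<Sum>p\<in>{..<Q}. m)" by (intro sum_mono le)
  finally show False using assms(3) by simp
qed

lemma sum_list_const: "(\<forall>x\<in>set xs. f x = (v::nat)) \<Longrightarrow> sum_list (map f xs) = length xs * v"
  by (induction xs) auto

lemma foldl_dfao: "dfao Q \<delta> q0 out \<Longrightarrow> q < Q \<Longrightarrow> foldl \<delta> q w < Q"
  by (induction w arbitrary: q) (auto simp: dfao_def)

lemma pow_bracket:
  assumes b: "(\<beta>::real) > 1" and X: "X \<ge> 1"
  shows "\<exists>L. \<beta>^L \<le> X \<and> X < \<beta>^Suc L"
proof -
  obtain n where n: "X < \<beta>^n" using real_arch_pow[OF b] by blast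
  define l where "l = (LEAST l. X < \<beta>^l)"
  have l1: "X < \<beta>^l" unfolding l_def by (rule LeastI[of _ n]) (rule n)
  have l0: "l \<noteq> 0" using l1 X by (cases "l = 0") auto
  have "\<not> X < \<beta>^(l - 1)" unfolding l_def by (rule not_less_Least) (use l0 in \<open>simp add: l_def\<close>)
  then show ?thesis using l1 l0 by (intro exI[of _ "l - 1"]) auto
qed


theorem mainTheorem1:
  fixes \<beta> :: real and k Q :: nat
  assumes "\<beta> > 1" and "parry \<beta>" and "k \<ge> 1"
  shows "\<exists>c::real. c > 0 \<and>
    (\<forall>\<delta> q0 out s. dfao Q \<delta> q0 out \<longrightarrow> generated_by \<beta> \<delta> q0 out s \<longrightarrow>
       (\<exists>N0. \<forall>N\<ge>N0. real_of_int (corrC (2 * k) s N) \<ge> c * real N))"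
proof -
  note b = assms(1) and p = assms(2) and k1 = assms(3)
  define K where "K = Q * (2*k - 1) + 1"
  obtain g where g: "\<beta> / (\<beta>-1)^2 < \<beta>^g" using real_arch_pow[OF b] by blast
  define G where "G = g + K"
  define c where "c = (\<beta> - 1) / (2 * \<beta>^Suc G)"
  have bpos: "\<beta> > 0" "\<beta> - 1 > 0" using b by auto
  have c0: "c > 0" using b by (simp add: c_def)
  have sm: "strict_mono (Uv \<beta>)" by (rule Uv_smono[OF b p])
  have mono: "Uv \<beta> a \<le> Uv \<beta> a'" if "a \<le> a'" for a a' using strict_mono_mono[OF sm] that by (simp add: monoD)
  have Uup: "real (Uv \<beta> i) \<le> \<beta>^Suc i / (\<beta> - 1)" for i
    using U_upper[OF b p, of i] Sg_le[OF b, of i] Uv_real[OF b p, of i] by linarith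
  have Ulo: "\<beta>^i \<le> real (Uv \<beta> i)" for i using U_lower[OF b p, of i] Uv_real[OF b p, of i] by simp
  have Ugap: "real (Uv \<beta> (Suc i)) - real (Uv \<beta> i) \<ge> (\<beta> - 1) * \<beta>^i" for i
    using U_gap[OF b p, of i] Uv_real[OF b p] by simp
  show ?thesis
  proof (intro exI[of _ c] conjI c0 allI impI)
    fix \<delta> q0 out s
    assume dfa: "dfao Q \<delta> q0 out" and gen: "generated_by \<beta> \<delta> q0 out s"
    show "\<exists>N0. \<forall>N\<ge>N0. c * real N \<le> real_of_int (corrC (2 * k) s N)"
    proof (intro exI[of _ "nat \<lceil>2 * \<beta>^Suc G / (\<beta> - 1)\<rceil>"] allI impI)
      fix N assume N: "nat \<lceil>2 * \<beta>^Suc G / (\<beta> - 1)\<rceil> \<le> N"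
      define X where "X = real N * (\<beta> - 1) / (2 * \<beta>^G)"
      have "2 * \<beta>^Suc G / (\<beta> - 1) \<le> real N" using N by linarith
      then have Xb: "\<beta> \<le> X" using bpos unfolding X_def by (simp add: field_simps)
      then obtain L where L: "\<beta>^L \<le> X" "X < \<beta>^Suc L" using pow_bracket[OF b, of X] b by auto
      have "\<beta>^1 < \<beta>^Suc L" using Xb L by simp
      then have "1 < Suc L" using b by (cases L) auto
      then obtain j where j: "L = Suc j" by (cases L) auto
      define A where "A = {L+g..<L+g+K}"
      define f where "f T = foldl \<delta> q0 (1 # replicate (T - Suc j) 0)" for T
      have fQ: "\<forall>T\<in>A. f T < Q" using foldl_dfao[OF dfa] dfa by (auto simp: f_def dfao_def)
      have "card A > Q * (2*k-1)" by (simp add: A_def K_def)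
      then obtain pq where "card {T\<in>A. f T = pq} > 2*k-1" using pigeon[OF _ fQ] by (auto simp: A_def)
      then have "2*k \<le> card {T\<in>A. f T = pq}" using k1 by simp
      then obtain F where F: "F \<subseteq> {T\<in>A. f T = pq}" "card F = 2*k" "finite F"
        by (rule obtain_subset_with_card_n)
      define xs where "xs = sorted_list_of_set F"
      define D where "D = map (Uv \<beta>) xs"
      define M where "M = Uv \<beta> L"
      have xsF: "set xs = F" "length xs = 2*k" using F by (simp_all add: xs_def)
      have lenD: "length D = 2*k" using xsF by (simp add: D_def)
      have sortD: "sorted_wrt (<) D" unfolding D_def sorted_wrt_map
        by (rule sorted_wrt_mono_rel[OF _ strict_sorted_list_of_set[of F, folded xs_def]])
           (use sm in \<open>simp add: strict_mono_less\<close>)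
      have TA: "L + g \<le> T \<and> T \<le> L + G - 1" if "T \<in> F" for T using that F(1) by (auto simp: A_def G_def)
      have G1: "G \<ge> 1" by (simp add: G_def K_def)
      have "D \<noteq> []" using lenD k1 by auto
      then have "last D \<in> set D" by simp
      then obtain T0 where T0: "T0 \<in> F" "last D = Uv \<beta> T0" using xsF by (auto simp: D_def)
      have "real (last D) \<le> real (Uv \<beta> (L + G - 1))" using T0 TA[of T0] mono by simp
      also have "\<dots> \<le> \<beta>^(L+G) / (\<beta> - 1)" using Uup[of "L+G-1"] G1 by simp
      finally have lD: "real (last D) \<le> \<beta>^(L+G) / (\<beta> - 1)" .
      have "real M \<le> \<beta>^Suc L / (\<beta>-1)" using Uup by (simp add: M_def)
      also have "\<dots> \<le> \<beta>^(L+G) / (\<beta> - 1)" using b G1 bpos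
        by (intro divide_right_mono power_increasing) auto
      finally have lM: "real M \<le> \<beta>^(L+G) / (\<beta> - 1)" .
      have "\<beta>^(L+G) / (\<beta> - 1) = \<beta>^L * \<beta>^G / (\<beta> - 1)" by (simp add: power_add)
      also have "\<dots> \<le> X * \<beta>^G / (\<beta> - 1)" using L bpos by (intro divide_right_mono mult_right_mono) auto
      also have "\<dots> = real N / 2" using bpos by (simp add: X_def field_simps)
      finally have "real M + real (last D) \<le> real N" using lD lM by linarith
      then have MD: "M + last D \<le> N" by linarith
      have agree: "s (n + Uv \<beta> T) = out (foldl \<delta> pq (greedy_digits (Uv \<beta>) j n))" if n: "n < M" and T: "T \<in> F" for n T
      proof -
        have TL: "L + g \<le> T" using TA[OF T] by simp
        have "real n < real M" using n by simp
        also have "\<dots> \<le> \<beta>^Suc L / (\<beta>-1)" using Uup by (simp add: M_def)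
        also have "\<dots> = (\<beta>-1) * (\<beta>^L * (\<beta> / (\<beta>-1)^2))"
        proof -
          have ne: "\<beta> - 1 \<noteq> 0" using bpos by simp
          have "(\<beta>-1) * (\<beta>^L * (\<beta> / (\<beta>-1)^2)) = \<beta>^L * \<beta> * ((\<beta>-1) / ((\<beta>-1)*(\<beta>-1)))"
            by (simp add: power2_eq_square)
          also have "(\<beta>-1) / ((\<beta>-1)*(\<beta>-1)) = 1 / (\<beta>-1)" using ne by simp
          finally show ?thesis by (simp add: mult.commute)
        qed
        also have "\<dots> \<le> (\<beta>-1) * (\<beta>^L * \<beta>^g)" using g bpos by (intro mult_left_mono) auto
        also have "\<dots> \<le> (\<beta>-1) * \<beta>^T" using TL b bpos by (intro mult_left_mono) (auto simp: power_add[symmetric] intro: power_increasing)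
        also have "\<dots> \<le> real (Uv \<beta> (Suc T)) - real (Uv \<beta> T)" by (rule Ugap)
        finally have gap: "Uv \<beta> T + n < Uv \<beta> (Suc T)" by linarith
        have rep: "rep_U \<beta> (Uv \<beta> T + n) = 1 # replicate (T - Suc j) 0 @ greedy_digits (Uv \<beta>) j n"
          by (rule rep_shift[OF b p]) (use TL j n gap in \<open>auto simp: M_def\<close>)
        have "f T = pq" using T F(1) by auto
        then show ?thesis using gen rep unfolding generated_by_def f_def by (simp add: add.commute)
      qed
      have "corrV s M D = (\<Sum>n<M. (1::int))"
        unfolding corrV_def
      proof (intro sum.cong refl)
        fix n assume "n \<in> {..<M}"
        then have "(\<Sum>d\<leftarrow>D. s (n + d)) = length xs * out (foldl \<delta> pq (greedy_digits (Uv \<beta>) j n))"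
        proof -
          have "\<forall>T\<in>set xs. s (n + Uv \<beta> T) = out (foldl \<delta> pq (greedy_digits (Uv \<beta>) j n))"
            using agree \<open>n \<in> {..<M}\<close> xsF by auto
          from sum_list_const[OF this] show ?thesis unfolding D_def by (simp add: comp_def)
        qed
        then show "(-1::int) ^ (\<Sum>d\<leftarrow>D. s (n + d)) = 1" using xsF by simp
      qed
      then have cv: "corrV s M D = int M" by simp
      have "corrC (2*k) s N \<ge> \<bar>corrV s M D\<bar>" by (rule corrC_ge[OF lenD sortD MD]) (use k1 in simp)
      then have "real_of_int (corrC (2*k) s N) \<ge> real M" using cv by linarith
      moreover have "c * real N \<le> real M"
      proof -
        have "c * real N = X / \<beta>" using bpos by (simp add: c_def X_def field_simps)
        also have "\<dots> \<le> \<beta>^L" using L bpos by (simp add: divide_le_eq mult.commute)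
        also have "\<dots> \<le> real M" using Ulo by (simp add: M_def)
        finally show ?thesis .
      qed
      ultimately show "c * real N \<le> real_of_int (corrC (2 * k) s N)" by linarith
    qed
  qed
qed

end
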